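(* Let $(X,\mathrm{d})$ be a compact metric space and let $f\colon X\to X$ be a bi-Lipschitz homeomorphism such that $\mathrm{d}$ is $f$-hyperbolic. Then $f$ is $\mathrm{d}_W$-robustly expansive: there are $\epsilon,\delta>0$ such that every bi-Lipschitz homeomorphism $g\colon X\to X$ with $\mathrm{d}_W(f,g)<\epsilon$ is expansive with expansive constant $\delta$.
   Context: A homeomorphism $g$ of a compact metric space $(X,\mathrm{d})$ is expansive with expansive constant $\delta>0$ if $\mathrm{d}(g^n(x),g^n(y))\le\delta$ for all $n\in\mathbb Z$ implies $x=y$. A metric $\mathrm{d}$ defining the topology of $X$ is $f$-hyperbolic if there are $\delta>0$ and $\lambda>1$ such that $\mathrm{d}(x,y)<\delta$ implies $\max\{\mathrm{d}(f(x),f(y)),\mathrm{d}(f^{-1}(x),f^{-1}(y))\}\ge\lambda\,\mathrm{d}(x,y)$. For homeomorphisms $f,g$ of $X$, $\mathrm{d}_{C^0}(f,g)=\max_{x}\mathrm{d}(f(x),g(x))+\max_x\mathrm{d}(f^{-1}(x),g^{-1}(x))$. For Lipschitz maps, $\mathrm{d}'_W(f,g)=\sup_{x\ne y}\frac{|\mathrm{d}(f(x),f(y))-\mathrm{d}(g(x),g(y))|}{\mathrm{d}(x,y)}$, and for bi-Lipschitz homeomorphisms $\mathrm{d}_W(f,g)=\mathrm{d}_{C^0}(f,g)+\mathrm{d}'_W(f,g)+\mathrm{d}'_W(f^{-1},g^{-1})$. *)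

theory Defs
  imports "HOL-Analysis.Analysis"
begin

(* The space X is a subset of a metric space type, with the induced metric dist.
   A homeomorphism of X is given together with its inverse. *)

definition bilip_homeo :: "'a::metric_space set \<Rightarrow> ('a \<Rightarrow> 'a) \<Rightarrow> ('a \<Rightarrow> 'a) \<Rightarrow> bool" where
  "bilip_homeo X f finv \<longleftrightarrow> homeomorphism X X f finv \<and>
     (\<exists>L. L-lipschitz_on X f) \<and> (\<exists>L. L-lipschitz_on X finv)"

definition iter_int :: "('a \<Rightarrow> 'a) \<Rightarrow> ('a \<Rightarrow> 'a) \<Rightarrow> int \<Rightarrow> 'a \<Rightarrow> 'a" where
  "iter_int g ginv n = (if 0 \<le> n then (g ^^ nat n) else (ginv ^^ nat (- n)))"

definition expansive_with :: "'a::metric_space set \<Rightarrow> ('a \<Rightarrow> 'a) \<Rightarrow> ('a \<Rightarrow> 'a) \<Rightarrow> real \<Rightarrow> bool" where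
  "expansive_with X g ginv \<delta> \<longleftrightarrow> (\<forall>x\<in>X. \<forall>y\<in>X.
      (\<forall>n::int. dist (iter_int g ginv n x) (iter_int g ginv n y) \<le> \<delta>) \<longrightarrow> x = y)"

definition f_hyperbolic :: "'a::metric_space set \<Rightarrow> ('a \<Rightarrow> 'a) \<Rightarrow> ('a \<Rightarrow> 'a) \<Rightarrow> bool" where
  "f_hyperbolic X f finv \<longleftrightarrow> (\<exists>\<delta>>0. \<exists>lam>1. \<forall>x\<in>X. \<forall>y\<in>X. dist x y < \<delta> \<longrightarrow>
      max (dist (f x) (f y)) (dist (finv x) (finv y)) \<ge> lam * dist x y)"

definition d_C0 :: "'a::metric_space set \<Rightarrow> ('a \<Rightarrow> 'a) \<Rightarrow> ('a \<Rightarrow> 'a) \<Rightarrow> ('a \<Rightarrow> 'a) \<Rightarrow> ('a \<Rightarrow> 'a) \<Rightarrow> real" where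
  "d_C0 X f finv g ginv = (SUP x\<in>X. dist (f x) (g x)) + (SUP x\<in>X. dist (finv x) (ginv x))"

definition d_W' :: "'a::metric_space set \<Rightarrow> ('a \<Rightarrow> 'a) \<Rightarrow> ('a \<Rightarrow> 'a) \<Rightarrow> real" where
  "d_W' X f g = (SUP p\<in>{(x,y). x \<in> X \<and> y \<in> X \<and> x \<noteq> y}.
      \<bar>dist (f (fst p)) (f (snd p)) - dist (g (fst p)) (g (snd p))\<bar> / dist (fst p) (snd p))"

definition d_W :: "'a::metric_space set \<Rightarrow> ('a \<Rightarrow> 'a) \<Rightarrow> ('a \<Rightarrow> 'a) \<Rightarrow> ('a \<Rightarrow> 'a) \<Rightarrow> ('a \<Rightarrow> 'a) \<Rightarrow> real" where
  "d_W X f finv g ginv = d_C0 X f finv g ginv + d_W' X f g + d_W' X finv ginv"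

end

theory Submission
  imports Defs
begin

lemma fwd_contra:
  fixes h hinv :: "'a::metric_space \<Rightarrow> 'a"
  assumes maps: "\<forall>z\<in>X. h z \<in> X" and inv: "\<forall>z\<in>X. hinv (h z) = z"
    and H: "\<forall>u\<in>X. \<forall>v\<in>X. dist u v < \<delta> \<longrightarrow> \<mu> * dist u v \<le> max (dist (h u) (h v)) (dist (hinv u) (hinv v))"
    and mu: "\<mu> > 1" and x: "x \<in> X" and y: "y \<in> X"
    and bnd: "\<forall>k. dist ((h^^k) x) ((h^^k) y) \<le> c" and cd: "c < \<delta>"
    and pos: "dist x y > 0" and first: "\<mu> * dist x y \<le> dist (h x) (h y)"
  shows False
proof -
  define b where "b k = dist ((h^^k) x) ((h^^k) y)" for k
  have inX: "(h^^k) x \<in> X \<and> (h^^k) y \<in> X" for k by (induction k) (auto simp: maps x y)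
  have b0: "b 0 > 0" using pos by (simp add: b_def)
  have Q: "\<mu> * b k \<le> b (Suc k) \<and> \<mu>^k * b 0 \<le> b k" for k
  proof (induction k)
    case 0 then show ?case using first by (simp add: b_def)
  next
    case (Suc k)
    have "\<mu> * (\<mu>^k * b 0) \<le> \<mu> * b k" using Suc.IH mu by (intro mult_left_mono) auto
    then have pk: "\<mu>^(Suc k) * b 0 \<le> b (Suc k)" using Suc.IH by (simp add: mult.assoc)
    have "\<mu>^(Suc k) * b 0 > 0" using mu b0 by simp
    then have bp: "b (Suc k) > 0" using pk by linarith
    have bk0: "b k \<ge> 0" by (simp add: b_def)
    have "b k \<le> \<mu> * b k" using mu bk0 by (simp add: mult_le_cancel_right1)
    moreover have "b (Suc k) < \<mu> * b (Suc k)" using mu bp by simp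
    moreover have "\<mu> * b (Suc k) \<le> max (b (Suc (Suc k))) (b k)"
    proof -
      have u: "(h^^Suc k) x \<in> X" "(h^^Suc k) y \<in> X" using inX by blast+
      have "dist ((h^^Suc k) x) ((h^^Suc k) y) < \<delta>" using bnd cd by (meson le_less_trans)
      then have "\<mu> * b (Suc k) \<le> max (dist (h ((h^^Suc k) x)) (h ((h^^Suc k) y)))
          (dist (hinv ((h^^Suc k) x)) (hinv ((h^^Suc k) y)))"
        using H u unfolding b_def by blast
      moreover have "hinv ((h^^Suc k) x) = (h^^k) x" "hinv ((h^^Suc k) y) = (h^^k) y"
        using inv inX by auto
      ultimately show ?thesis by (simp add: b_def)
    qed
    ultimately have "\<mu> * b (Suc k) \<le> b (Suc (Suc k))" using Suc.IH by (auto simp: max_def split: if_splits)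
    then show ?case using pk by simp
  qed
  obtain k where k: "c / b 0 < \<mu>^k" using real_arch_pow[OF mu] by blast
  then have "c < \<mu>^k * b 0" using b0 by (simp add: pos_divide_less_eq)
  moreover have "b k \<le> c" using bnd by (simp add: b_def)
  ultimately show False using Q[of k] by linarith
qed

lemma dW'_upper:
  assumes "Lf-lipschitz_on X f" "Lg-lipschitz_on X g" "x \<in> X" "y \<in> X" "x \<noteq> y"
  shows "\<bar>dist (f x) (f y) - dist (g x) (g y)\<bar> / dist x y \<le> d_W' X f g"
proof -
  have bd: "\<bar>dist (f (fst p)) (f (snd p)) - dist (g (fst p)) (g (snd p))\<bar> / dist (fst p) (snd p) \<le> Lf + Lg"
    if p: "p \<in> {(x,y). x \<in> X \<and> y \<in> X \<and> x \<noteq> y}" for p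
  proof -
    obtain a b where ab: "p = (a,b)" "a \<in> X" "b \<in> X" "a \<noteq> b" using p by auto
    have d: "dist a b > 0" using ab by simp
    have "dist (f a) (f b) \<le> Lf * dist a b" using assms(1) ab unfolding lipschitz_on_def by blast
    moreover have "dist (g a) (g b) \<le> Lg * dist a b" using assms(2) ab unfolding lipschitz_on_def by blast
    ultimately have "\<bar>dist (f a) (f b) - dist (g a) (g b)\<bar> \<le> (Lf + Lg) * dist a b"
      by (simp add: algebra_simps abs_le_iff) (smt (verit) zero_le_dist)
    then show ?thesis using d ab by (simp add: pos_divide_le_eq)
  qed
  have bdd: "bdd_above ((\<lambda>p. \<bar>dist (f (fst p)) (f (snd p)) - dist (g (fst p)) (g (snd p))\<bar> / dist (fst p) (snd p)) ` {(x,y). x \<in> X \<and> y \<in> X \<and> x \<noteq> y})"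
    by (rule bdd_aboveI2) (rule bd)
  have mem: "(x,y) \<in> {(x,y). x \<in> X \<and> y \<in> X \<and> x \<noteq> y}" using assms by auto
  show ?thesis unfolding d_W'_def using cSUP_upper[OF mem bdd] by simp
qed

lemma sup_nonneg:
  fixes f g :: "'a::metric_space \<Rightarrow> 'a"
  assumes "X \<noteq> {}" "bounded X" "\<forall>x\<in>X. f x \<in> X \<and> g x \<in> X"
  shows "0 \<le> (SUP x\<in>X. dist (f x) (g x))"
proof -
  obtain a e where ae: "\<forall>y\<in>X. dist a y \<le> e" using assms(2) unfolding bounded_def by blast
  have "dist (f x) (g x) \<le> 2 * e" if "x \<in> X" for x
  proof -
    have "dist a (f x) \<le> e" "dist a (g x) \<le> e" using ae assms(3) that by auto
    then show ?thesis using dist_triangle3[of "f x" "g x" a] by linarith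
  qed
  then have "bdd_above ((\<lambda>x. dist (f x) (g x)) ` X)" by (intro bdd_aboveI2)
  moreover obtain x0 where "x0 \<in> X" using assms(1) by blast
  ultimately show ?thesis by (intro cSUP_upper2[where x=x0]) auto
qed

theorem theorem2:
  fixes X :: "'a::metric_space set" and f finv :: "'a \<Rightarrow> 'a"
  assumes "compact X"
    and "bilip_homeo X f finv"
    and "f_hyperbolic X f finv"
  shows "\<exists>\<epsilon>>0. \<exists>\<delta>>0. \<forall>g ginv. bilip_homeo X g ginv \<and> d_W X f finv g ginv < \<epsilon>
            \<longrightarrow> expansive_with X g ginv \<delta>"
proof -
  obtain \<delta>0 lam where d0: "\<delta>0 > 0" and lam: "lam > 1" and hyp:
    "\<forall>x\<in>X. \<forall>y\<in>X. dist x y < \<delta>0 \<longrightarrow> max (dist (f x) (f y)) (dist (finv x) (finv y)) \<ge> lam * dist x y"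
    using assms(3) unfolding f_hyperbolic_def by blast
  obtain Lf Lfi where Lf: "Lf-lipschitz_on X f" and Lfi: "Lfi-lipschitz_on X finv"
    and hf: "homeomorphism X X f finv"
    using assms(2) unfolding bilip_homeo_def by blast
  have bX: "bounded X" using assms(1) compact_imp_bounded by blast
  define \<epsilon> where "\<epsilon> = (lam - 1) / 2"
  define \<mu> where "\<mu> = lam - \<epsilon>"
  have mueq: "\<mu> = (lam + 1) / 2" unfolding \<mu>_def \<epsilon>_def by (simp add: field_simps)
  have ep: "\<epsilon> > 0" and mu: "\<mu> > 1" using lam by (auto simp: \<epsilon>_def mueq)
  have "\<forall>g ginv. bilip_homeo X g ginv \<and> d_W X f finv g ginv < \<epsilon> \<longrightarrow> expansive_with X g ginv (\<delta>0/2)"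
  proof (intro allI impI)
    fix g ginv assume a: "bilip_homeo X g ginv \<and> d_W X f finv g ginv < \<epsilon>"
    obtain Lg Lgi where Lg: "Lg-lipschitz_on X g" and Lgi: "Lgi-lipschitz_on X ginv"
      and hg: "homeomorphism X X g ginv"
      using a unfolding bilip_homeo_def by blast
    have gX: "\<forall>z\<in>X. g z \<in> X" "\<forall>z\<in>X. ginv z \<in> X" "\<forall>z\<in>X. ginv (g z) = z" "\<forall>z\<in>X. g (ginv z) = z"
      using hg unfolding homeomorphism_def by auto
    have fX: "\<forall>z\<in>X. f z \<in> X" "\<forall>z\<in>X. finv z \<in> X"
      using hf unfolding homeomorphism_def by auto
    show "expansive_with X g ginv (\<delta>0/2)"
      unfolding expansive_with_def
    proof (intro ballI impI)
      fix x y assume x: "x \<in> X" and y: "y \<in> X"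
        and orb: "\<forall>n::int. dist (iter_int g ginv n x) (iter_int g ginv n y) \<le> \<delta>0/2"
      show "x = y"
      proof (rule ccontr)
        assume xy: "x \<noteq> y"
        have A0: "0 \<le> d_W' X f g"
          using dW'_upper[OF Lf Lg x y xy] by (meson divide_nonneg_nonneg abs_ge_zero zero_le_dist order_trans)
        have B0: "0 \<le> d_W' X finv ginv"
          using dW'_upper[OF Lfi Lgi x y xy] by (meson divide_nonneg_nonneg abs_ge_zero zero_le_dist order_trans)
        have "X \<noteq> {}" using x by blast
        then have C0: "0 \<le> d_C0 X f finv g ginv"
          unfolding d_C0_def using sup_nonneg[OF _ bX, of f g] sup_nonneg[OF _ bX, of finv ginv] fX gX
          by (meson add_nonneg_nonneg)
        have A: "d_W' X f g < \<epsilon>" and B: "d_W' X finv ginv < \<epsilon>"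
          using a A0 B0 C0 unfolding d_W_def by linarith+
        have Hg: "\<forall>u\<in>X. \<forall>v\<in>X. dist u v < \<delta>0 \<longrightarrow> \<mu> * dist u v \<le> max (dist (g u) (g v)) (dist (ginv u) (ginv v))"
        proof (intro ballI impI)
          fix u v assume u: "u \<in> X" and v: "v \<in> X" and uv: "dist u v < \<delta>0"
          show "\<mu> * dist u v \<le> max (dist (g u) (g v)) (dist (ginv u) (ginv v))"
          proof (cases "u = v")
            case True then show ?thesis by simp
          next
            case False
            have d: "dist u v > 0" using False by simp
            have e1: "\<bar>dist (f u) (f v) - dist (g u) (g v)\<bar> \<le> d_W' X f g * dist u v"
              using dW'_upper[OF Lf Lg u v False] d by (simp add: pos_divide_le_eq)
            have e2: "\<bar>dist (finv u) (finv v) - dist (ginv u) (ginv v)\<bar> \<le> d_W' X finv ginv * dist u v"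
              using dW'_upper[OF Lfi Lgi u v False] d by (simp add: pos_divide_le_eq)
            have "d_W' X f g * dist u v \<le> \<epsilon> * dist u v" using A d by (intro mult_right_mono) auto
            moreover have "d_W' X finv ginv * dist u v \<le> \<epsilon> * dist u v" using B d by (intro mult_right_mono) auto
            moreover have "lam * dist u v \<le> max (dist (f u) (f v)) (dist (finv u) (finv v))"
              using hyp u v uv by blast
            ultimately show ?thesis using e1 e2 unfolding \<mu>_def
              by (simp add: max_def algebra_simps abs_le_iff split: if_splits)
          qed
        qed
        have fw: "\<forall>k. dist ((g^^k) x) ((g^^k) y) \<le> \<delta>0/2"
        proof
          fix k have "iter_int g ginv (int k) = g^^k" by (simp add: iter_int_def)
          then show "dist ((g^^k) x) ((g^^k) y) \<le> \<delta>0/2" using orb[rule_format, of "int k"] by simp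
        qed
        have bw: "\<forall>k. dist ((ginv^^k) x) ((ginv^^k) y) \<le> \<delta>0/2"
        proof
          fix k have "iter_int g ginv (- int k) = ginv^^k" by (cases k) (auto simp: iter_int_def nat_add_distrib)
          then show "dist ((ginv^^k) x) ((ginv^^k) y) \<le> \<delta>0/2" using orb[rule_format, of "- int k"] by simp
        qed
        have dxy: "dist x y < \<delta>0" using orb[rule_format, of 0] d0 by (simp add: iter_int_def)
        have pos: "dist x y > 0" using xy by simp
        have cd: "\<delta>0/2 < \<delta>0" using d0 by simp
        have "\<mu> * dist x y \<le> max (dist (g x) (g y)) (dist (ginv x) (ginv y))" using Hg x y dxy by blast
        then consider "\<mu> * dist x y \<le> dist (g x) (g y)" | "\<mu> * dist x y \<le> dist (ginv x) (ginv y)"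
          by (auto simp: max_def split: if_splits)
        then show False
        proof cases
          case 1 show False
            by (rule fwd_contra[OF gX(1) gX(3) Hg mu x y fw cd pos 1])
        next
          case 2
          have Hg': "\<forall>u\<in>X. \<forall>v\<in>X. dist u v < \<delta>0 \<longrightarrow> \<mu> * dist u v \<le> max (dist (ginv u) (ginv v)) (dist (g u) (g v))"
            using Hg by (simp add: max.commute)
          show False
            by (rule fwd_contra[OF gX(2) gX(4) Hg' mu x y bw cd pos 2])
        qed
      qed
    qed
  qed
  then show ?thesis using ep d0 by (intro exI[of _ \<epsilon>] conjI exI[of _ "\<delta>0/2"]) auto
qed

end
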